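(* Let $\Delta x>0$, $v>0$, $w>0$, $q_{max}>0$, $0\le n\le n_{max}$, and put $\bar n=n_{max}-n$. Let $U_{fw},U_{bw},Q,Y_{fw},Y_{bw}\in F$ with $U_{fw}(0)=U_{bw}(0)=Y_{fw}(0)=Y_{bw}(0)=0$ satisfy the road-section dynamics $$Q=A*Q\oplus B*U,\qquad Y=C*Q\oplus e,$$ where $U=(U_{fw},U_{bw})^T$, $Y=(Y_{fw},Y_{bw})^T$, $A=\gamma^{q_{max}\Delta x/v}\delta^{\Delta x/v}$ (a scalar), $B=(\gamma^{n}\delta^{\Delta x/v}\ \ e)$ (a $1\times 2$ row), $C=(e\ \ \gamma^{\bar n}\delta^{\Delta x/w})^T$ (a $2\times 1$ column), and $e$ in the second equation denotes the vector $(e,e)^T$. Explicitly, $Q(t)=\min\{Q(t-\Delta x/v)+q_{max}\Delta x/v,\ U_{fw}(t-\Delta x/v)+n,\ U_{bw}(t)\}$, $Y_{fw}=Q$, $Y_{bw}(t)=Q(t-\Delta x/w)+\bar n$ for $t>0$. Define $Z_{fw}(t)=\max(Y_{fw}(t)-n,0)$, $Z_{bw}(t)=\max(Y_{bw}(t)-\bar n,0)$ and $Z=(Z_{fw},Z_{bw})^T$. Then the matrix $H*(e\oplus C*A^{*}*B)$ is a service matrix for the road section seen as a server with input $U$ and output $Z$, i.e. $$Z\ge H*(e\oplus C*A^{*}*B)*U,\qquad H=\begin{pmatrix}\gamma^{-n}& e\\ e&\gamma^{-\bar n}\end{pmatrix},$$ where the $e$ added to $C*A^**B$ is the $2\times 2$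 identity matrix.
   Context: $F$ denotes the set of non-decreasing, non-negative functions of time $t\ge 0$. Min-plus operations: $(f\oplus g)(t)=\min(f(t),g(t))$, $(f*g)(t)=\min_{0\le s\le t}(f(s)+g(t-s))$; juxtaposition $fg$ means $f*g$. Special signals: $\varepsilon(t)=+\infty$ for all $t$; $e(0)=0$, $e(t)=+\infty$ for $t>0$; the gain $\gamma^p(0)=p$, $\gamma^p(t)=+\infty$ for $t>0$ (so $\gamma^p*f=f+p$; $p$ may be negative); the shift $\delta^T(t)=0$ for $0\le t\le T$, $\delta^T(t)=+\infty$ for $t>T$ (so $(\delta^T*f)(t)=f(\max(t-T,0))$ for nondecreasing $f$). Powers $f^0=e$, $f^k=f^{k-1}*f$; sub-additive closure $f^*=\bigoplus_{k\ge0}f^k$. For matrices, $(A\oplus B)_{ij}=A_{ij}\oplus B_{ij}$, $(A*B)_{ij}=\min_k A_{ik}*B_{kj}$; the identity matrix has $e$ on the diagonal and $\varepsilon$ off the diagonal. A matrix $\beta$ is a service matrix for a server with input $U$ and output $Z$ if $Z\ge\beta*U$ componentwise. Interpretation: $U_{fw}$ is the cumulated demand inflow from upstream, $U_{bw}$ the cumulated supply of the downstream section, $n$ the initial number of cars, $n_{max}$ the capacity (max number of cars) of the section. *)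

theory Defs
  imports "HOL-Library.Extended_Real"
begin

text \<open>Signals: functions of time with values in the extended reals; only times t \<ge> 0 matter.\<close>
type_synonym signal = "real \<Rightarrow> ereal"

definition inF :: "signal \<Rightarrow> bool" where
  "inF f \<longleftrightarrow> mono_on {0..} f \<and> (\<forall>t\<ge>0. f t \<ge> 0)"

definition oplus :: "signal \<Rightarrow> signal \<Rightarrow> signal" where
  "oplus f g = (\<lambda>t. min (f t) (g t))"

definition conv :: "signal \<Rightarrow> signal \<Rightarrow> signal" where
  "conv f g = (\<lambda>t. INF s\<in>{0..t}. f s + g (t - s))"

definition eps :: signal where "eps = (\<lambda>t. \<infinity>)"
definition ee :: signal where "ee = (\<lambda>t. if t = 0 then 0 else \<infinity>)"
definition gam :: "real \<Rightarrow> signal" where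
  "gam p = (\<lambda>t. if t = 0 then ereal p else \<infinity>)"
definition dshift :: "real \<Rightarrow> signal" where
  "dshift T = (\<lambda>t. if 0 \<le> t \<and> t \<le> T then 0 else \<infinity>)"

primrec pow :: "signal \<Rightarrow> nat \<Rightarrow> signal" where
  "pow f 0 = ee"
| "pow f (Suc k) = conv (pow f k) f"

definition star :: "signal \<Rightarrow> signal" where
  "star f = (\<lambda>t. INF k. pow f k t)"

text \<open>Matrices of signals, indexed by naturals (row, column); dimensions are explicit.\<close>
type_synonym smat = "nat \<Rightarrow> nat \<Rightarrow> signal"

definition madd :: "smat \<Rightarrow> smat \<Rightarrow> smat" where
  "madd A B = (\<lambda>i j. oplus (A i j) (B i j))"

definition mmul :: "nat \<Rightarrow> smat \<Rightarrow> smat \<Rightarrow> smat" where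
  "mmul m A B = (\<lambda>i j t. INF l\<in>{..<m}. conv (A i l) (B l j) t)"

definition mid :: smat where
  "mid = (\<lambda>i j. if i = j then ee else eps)"

end

theory Submission
  imports Defs
begin

lemma conv_le: "0 \<le> s \<Longrightarrow> s \<le> t \<Longrightarrow> conv f g t \<le> f s + g (t - s)"
  unfolding conv_def by (rule INF_lower) auto

lemma conv_le0: "0 \<le> t \<Longrightarrow> conv f g t \<le> f 0 + g t"
  using conv_le[of 0 t f g] by simp

lemma conv_ge: "(\<And>s. 0 \<le> s \<Longrightarrow> s \<le> t \<Longrightarrow> x \<le> f s + g (t - s)) \<Longrightarrow> x \<le> conv f g t"
  unfolding conv_def by (rule INF_greatest) auto

lemma gd_le: "0 \<le> x \<Longrightarrow> x \<le> T \<Longrightarrow> conv (gam p) (dshift T) x \<le> ereal p"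
  using conv_le0[of x "gam p" "dshift T"] by (simp add: gam_def dshift_def)

lemma gd_ge: "0 \<le> x \<Longrightarrow> x \<le> T \<Longrightarrow> ereal p \<le> conv (gam p) (dshift T) x"
  by (rule conv_ge) (auto simp: gam_def dshift_def)

lemma gd_inf: "T < x \<Longrightarrow> conv (gam p) (dshift T) x = \<infinity>"
proof -
  assume "T < x"
  hence "\<infinity> \<le> conv (gam p) (dshift T) x"
    by (intro conv_ge) (auto simp: gam_def dshift_def)
  thus ?thesis by simp
qed

lemma conv_gd_ge:
  assumes "mono_on {0..} f" "0 \<le> T" "0 \<le> t"
  shows "ereal p + f (t - min t T) \<le> conv (conv (gam p) (dshift T)) f t"
proof (rule conv_ge)
  fix s assume s: "0 \<le> s" "s \<le> t"
  show "ereal p + f (t - min t T) \<le> conv (gam p) (dshift T) s + f (t - s)"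
  proof (cases "s \<le> T")
    case True
    have "f (t - min t T) \<le> f (t - s)" using assms s True by (intro mono_onD[OF assms(1)]) auto
    with gd_ge[of s T p] s True show ?thesis by (auto intro: add_mono)
  next
    case False then show ?thesis using gd_inf[of T s p] by simp
  qed
qed

lemma conv_ee_ge: "0 \<le> t \<Longrightarrow> f t \<le> conv ee f t"
  by (rule conv_ge) (auto simp: ee_def)

lemma conv_ee_le: "0 \<le> t \<Longrightarrow> conv ee f t \<le> f t"
  using conv_le0[of t ee f] by (simp add: ee_def)

lemma mmul_le: "l < m \<Longrightarrow> mmul m A B i j t \<le> conv (A i l) (B l j) t"
  unfolding mmul_def by (rule INF_lower) simp

lemma mmul1: "mmul 1 A B i j t = conv (A i 0) (B 0 j) t"
proof -
  have "{..<1::nat} = {0}" by auto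
  thus ?thesis unfolding mmul_def by simp
qed

lemma mmul2: "mmul 2 A B i j t = min (conv (A i 0) (B 0 j) t) (conv (A i 1) (B 1 j) t)"
proof -
  have "{..<2::nat} = {0,1}" by auto
  thus ?thesis unfolding mmul_def by (simp add: inf_min)
qed

lemma em1: "- ereal a + (x + ereal a) = x" by (cases x) auto
lemma em2: "- ereal a + (ereal a + x) = x" by (cases x) auto
lemma em1': "ereal (- a) + (x + ereal a) = x" by (cases x) auto
lemma em2': "ereal (- a) + (ereal a + x) = x" by (cases x) auto

lemma star_le: "star A x \<le> pow A k x"
  unfolding star_def by (rule INF_lower) simp

lemma star0: "star A 0 \<le> 0"
  using star_le[of A 0 0] by (simp add: ee_def)

lemma star1: "0 \<le> x \<Longrightarrow> star A x \<le> A x"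
  using star_le[of A x 1] conv_ee_le[of x A] by simp

lemma star_shift:
  assumes "0 \<le> s" "0 \<le> d" "A d \<le> ereal c"
  shows "star A (s + d) \<le> ereal c + star A s"
proof -
  have "star A (s + d) - ereal c \<le> (INF k. pow A k s)"
  proof (rule INF_greatest)
    fix k assume "k \<in> (UNIV::nat set)"
    have "star A (s + d) \<le> pow A (Suc k) (s + d)" by (rule star_le)
    also have "\<dots> \<le> pow A k s + A d" using conv_le[of s "s+d" "pow A k" A] assms by simp
    also have "\<dots> \<le> pow A k s + ereal c" using assms by (intro add_left_mono) auto
    finally show "star A (s + d) - ereal c \<le> pow A k s" by (simp add: ereal_minus_le)
  qed
  hence "star A (s + d) - ereal c \<le> star A s" by (simp add: star_def)
  thus ?thesis by (simp add: ereal_minus_le add.commute)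
qed

theorem theorem2:
  fixes dx v w qmax n nmax :: real
    and Ufw Ubw Q Yfw Ybw :: signal
  assumes "dx > 0" and "v > 0" and "w > 0" and "qmax > 0"
    and "0 \<le> n" and "n \<le> nmax"
    and "inF Ufw" and "inF Ubw" and "inF Q" and "inF Yfw" and "inF Ybw"
    and "Ufw 0 = 0" and "Ubw 0 = 0" and "Yfw 0 = 0" and "Ybw 0 = 0"
  defines "A \<equiv> conv (gam (qmax * dx / v)) (dshift (dx / v))"
    and "B \<equiv> (\<lambda>i j. if j = 0 then conv (gam n) (dshift (dx / v)) else ee) :: smat"
    and "C \<equiv> (\<lambda>i j. if i = 0 then ee else conv (gam (nmax - n)) (dshift (dx / w))) :: smat"
    and "U \<equiv> (\<lambda>i j. if i = 0 then Ufw else Ubw) :: smat"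
    and "Y \<equiv> (\<lambda>i j. if i = 0 then Yfw else Ybw) :: smat"
    and "Qm \<equiv> (\<lambda>i j. Q) :: smat"
    and "H \<equiv> (\<lambda>i j. if i = 0 \<and> j = 0 then gam (- n)
                   else if i = 1 \<and> j = 1 then gam (- (nmax - n)) else ee) :: smat"
    and "Z \<equiv> (\<lambda>i j t. if i = 0 then max (Yfw t - ereal n) 0
                     else max (Ybw t - ereal (nmax - n)) 0) :: smat"
  assumes dynQ: "\<forall>t\<ge>0. Q t = oplus (conv A Q) (mmul 2 B U 0 0) t"
    and dynY: "\<forall>i<2. \<forall>t\<ge>0. Y i 0 t = oplus (mmul 1 C Qm i 0) ee t"
  shows "\<forall>i<2. \<forall>t\<ge>0.
           Z i 0 t \<ge> mmul 2 (mmul 2 H (madd mid (mmul 1 (mmul 1 C (\<lambda>i j. star A)) B))) U i 0 t"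
proof -
  define d where "d = dx / v"
  define c where "c = qmax * dx / v"
  define S where "S = star A"
  have d0: "0 < d" using assms(1,2) by (simp add: d_def)
  have Aeq: "A = conv (gam c) (dshift d)" by (simp add: A_def c_def d_def)
  have Ad: "A d \<le> ereal c" unfolding Aeq using d0 by (intro gd_le) auto
  have Ale: "A x \<le> ereal c" if "0 \<le> x" "x \<le> d" for x unfolding Aeq using that by (intro gd_le) auto
  have monoQ: "mono_on {0..} Q" and Qnn: "\<And>t. 0 \<le> t \<Longrightarrow> 0 \<le> Q t" using assms(9) by (auto simp: inF_def)
  have monoUf: "mono_on {0..} Ufw" using assms(7) by (auto simp: inF_def)
  have Qlow: "min (ereal c + Q (t - min t d)) (min (ereal n + Ufw (t - min t d)) (Ubw t)) \<le> Q t"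
    if t: "0 \<le> t" for t
  proof -
    have "Q t = min (conv A Q t) (mmul 2 B U 0 0 t)" using dynQ t by (simp add: oplus_def)
    also have "mmul 2 B U 0 0 t = min (conv (conv (gam n) (dshift d)) Ufw t) (conv ee Ubw t)"
      by (simp add: mmul2 B_def U_def d_def)
    finally have eq: "Q t = min (conv A Q t) (min (conv (conv (gam n) (dshift d)) Ufw t) (conv ee Ubw t))" .
    have a: "ereal c + Q (t - min t d) \<le> conv A Q t" unfolding Aeq
      using conv_gd_ge[OF monoQ _ t] d0 by simp
    have b: "ereal n + Ufw (t - min t d) \<le> conv (conv (gam n) (dshift d)) Ufw t"
      using conv_gd_ge[OF monoUf _ t] d0 by simp
    have cc: "Ubw t \<le> conv ee Ubw t" using conv_ee_ge[OF t] .
    show ?thesis unfolding eq using a b cc by (intro min.mono) auto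
  qed
  have S0: "S 0 \<le> 0" unfolding S_def by (rule star0)
  have Sle: "S x \<le> ereal c" if "0 \<le> x" "x \<le> d" for x
    unfolding S_def using star1[of x A] Ale[OF that] that by simp
  have Sshift: "S (s + d) \<le> ereal c + S s" if "0 \<le> s" for s
    unfolding S_def using star_shift[of s d A c] that Ad d0 by simp
  have Qind: "\<forall>t. 0 \<le> t \<and> t < real k * d \<longrightarrow> (\<exists>s. 0 \<le> s \<and> s \<le> t \<and>
     (ereal n + S s + Ufw (max (t - s - d) 0) \<le> Q t \<or> S s + Ubw (t - s) \<le> Q t))" for k
  proof (induction k)
    case 0 then show ?case using d0 by auto
  next
    case (Suc k)
    show ?case
    proof (intro allI impI)
      fix t assume t: "0 \<le> t \<and> t < real (Suc k) * d"
      have "ereal c + Q (t - min t d) \<le> Q t \<or> ereal n + Ufw (t - min t d) \<le> Q t \<or> Ubw t \<le> Q t"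
        using Qlow[of t] t by (auto simp: min_le_iff_disj)
      then show "\<exists>s. 0 \<le> s \<and> s \<le> t \<and>
         (ereal n + S s + Ufw (max (t - s - d) 0) \<le> Q t \<or> S s + Ubw (t - s) \<le> Q t)"
      proof (elim disjE)
        assume h: "ereal n + Ufw (t - min t d) \<le> Q t"
        have "ereal n + S 0 + Ufw (max (t - 0 - d) 0) \<le> ereal n + 0 + Ufw (t - min t d)"
          using S0 by (intro add_mono) (auto simp: max_def min_def)
        with h show ?thesis using t by (intro exI[of _ 0]) auto
      next
        assume h: "Ubw t \<le> Q t"
        have "S 0 + Ubw (t - 0) \<le> 0 + Ubw t" using S0 by (intro add_mono) auto
        with h show ?thesis using t by (intro exI[of _ 0]) auto
      next
        assume h: "ereal c + Q (t - min t d) \<le> Q t"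
        show ?thesis
        proof (cases "t \<le> d")
          case True
          have "S t + Ubw (t - t) \<le> ereal c" using Sle[of t] True t assms(13) by simp
          also have "ereal c \<le> ereal c + Q (t - min t d)" using Qnn[of "t - min t d"] t
            by (simp add: add_increasing2)
          finally show ?thesis using h t by (intro exI[of _ t]) auto
        next
          case False
          then have tm: "t - min t d = t - d" by simp
          have "0 \<le> t - d \<and> t - d < real k * d" using False t by (auto simp: algebra_simps)
          then obtain s where s: "0 \<le> s" "s \<le> t - d" and
            hs: "ereal n + S s + Ufw (max (t - d - s - d) 0) \<le> Q (t - d) \<or> S s + Ubw (t - d - s) \<le> Q (t - d)"
            using Suc.IH by blast
          have ss: "S (s + d) \<le> ereal c + S s" using Sshift s by simp
          from hs show ?thesis
          proof
            assume h2: "ereal n + S s + Ufw (max (t - d - s - d) 0) \<le> Q (t - d)"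
            have "ereal n + S (s + d) + Ufw (max (t - (s + d) - d) 0)
                \<le> ereal n + (ereal c + S s) + Ufw (max (t - d - s - d) 0)"
              using ss by (intro add_mono) (auto simp: algebra_simps)
            also have "\<dots> = ereal c + (ereal n + S s + Ufw (max (t - d - s - d) 0))"
              by (simp add: ac_simps)
            also have "\<dots> \<le> ereal c + Q (t - d)" using h2 by (intro add_left_mono)
            also have "\<dots> \<le> Q t" using h tm by simp
            finally show ?thesis using s d0 by (intro exI[of _ "s + d"]) auto
          next
            assume h2: "S s + Ubw (t - d - s) \<le> Q (t - d)"
            have "S (s + d) + Ubw (t - (s + d)) \<le> (ereal c + S s) + Ubw (t - d - s)"
              using ss by (intro add_mono) (auto simp: algebra_simps)
            also have "\<dots> = ereal c + (S s + Ubw (t - d - s))" by (simp add: ac_simps)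
            also have "\<dots> \<le> ereal c + Q (t - d)" using h2 by (intro add_left_mono)
            also have "\<dots> \<le> Q t" using h tm by simp
            finally show ?thesis using s d0 by (intro exI[of _ "s + d"]) auto
          qed
        qed
      qed
    qed
  qed
  have QP: "\<exists>s. 0 \<le> s \<and> s \<le> t \<and>
     (ereal n + S s + Ufw (max (t - s - d) 0) \<le> Q t \<or> S s + Ubw (t - s) \<le> Q t)" if "0 \<le> t" for t
  proof -
    obtain k where "t < real k * d" using ex_less_of_nat_mult[OF d0] by blast
    thus ?thesis using Qind[of k] that by blast
  qed
  define M where "M = madd mid (mmul 1 (mmul 1 C (\<lambda>i j. star A)) B)"
  define X where "X = mmul 2 H M"
  define w' where "w' = dx / w"
  define nb where "nb = nmax - n"
  have nb0: "0 \<le> nb" using assms(6) by (simp add: nb_def)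
  have w0: "0 < w'" using assms(1,3) by (simp add: w'_def)
  have RX: "mmul 2 X U i 0 t \<le> X i l s + U l 0 (t - s)" if "l < 2" "0 \<le> s" "s \<le> t" for i l t s
    using mmul_le[OF that(1), of X U i 0 t] conv_le[OF that(2,3), of "X i l" "U l 0"] by simp
  have XH: "X i l x \<le> H i i 0 + M i l x" if "i < 2" "0 \<le> x" for i l x
    using mmul_le[OF that(1), of H M i l x] conv_le0[OF that(2), of "H i i" "M i l"]
    unfolding X_def by simp
  have Mmid: "M i l x \<le> mid i l x" for i l x by (simp add: M_def madd_def oplus_def)
  have MC: "M i l x \<le> conv (conv (C i 0) S) (B 0 l) x" for i l x
    unfolding M_def madd_def oplus_def mmul1 S_def by simp
  have H00: "H 0 0 0 = - ereal n" and H11: "H 1 1 0 = - ereal nb"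
    by (auto simp: H_def gam_def nb_def)
  have B00: "B 0 0 x \<le> ereal n" if "0 \<le> x" "x \<le> d" for x
    unfolding B_def using gd_le[OF that] by (simp add: d_def)
  have B01: "B 0 1 0 = 0" by (simp add: B_def ee_def)
  have C10: "C 1 0 x \<le> ereal nb" if "0 \<le> x" "x \<le> w'" for x
    unfolding C_def using gd_le[OF that] by (simp add: w'_def nb_def)
  have CS0: "conv (C 0 0) S x \<le> S x" if "0 \<le> x" for x
    using conv_ee_le[OF that] by (simp add: C_def)
  have Z0: "0 \<le> Z i 0 t" for i t by (simp add: Z_def)
  have main: "\<forall>i<2. \<forall>t\<ge>0. mmul 2 X U i 0 t \<le> Z i 0 t"
  proof (intro allI impI)
    fix i :: nat and t :: real assume i: "i < 2" and t: "0 \<le> t"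
    show "mmul 2 X U i 0 t \<le> Z i 0 t"
    proof (cases "i = 0")
      case True
      note i0 = True
      show ?thesis
      proof (cases "t = 0")
        case True
        have "mmul 2 X U i 0 t \<le> X 0 0 0 + U 0 0 (t - 0)" using RX[of 0 0 t i] t i0 by simp
        also have "\<dots> = X 0 0 0" using True assms(12) by (simp add: U_def)
        also have "\<dots> \<le> - ereal n + M 0 0 0" using XH[of 0 0 0] H00 by simp
        also have "\<dots> \<le> - ereal n + mid 0 0 0" using Mmid by (intro add_left_mono)
        also have "\<dots> \<le> Z i 0 t" using Z0[of i t] assms(5) by (simp add: mid_def ee_def) (rule order_trans[of _ 0], auto)
        finally show ?thesis .
      next
        case False
        have "Y 0 0 t = oplus (mmul 1 C Qm 0 0) ee t" using dynY t by simp
        hence "Yfw t = min (conv ee Q t) (ee t)" unfolding mmul1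
          by (simp add: Y_def oplus_def C_def Qm_def)
        also have "\<dots> = conv ee Q t" using False by (simp add: ee_def)
        finally have "Q t \<le> Yfw t" using conv_ee_ge[OF t, of Q] by simp
        hence "Q t - ereal n \<le> Yfw t - ereal n" by (simp add: ereal_minus_mono)
        also have "\<dots> \<le> Z i 0 t" using i0 by (simp add: Z_def)
        finally have ZQ: "Q t - ereal n \<le> Z i 0 t" .
        obtain s where s: "0 \<le> s" "s \<le> t" and
          hs: "ereal n + S s + Ufw (max (t - s - d) 0) \<le> Q t \<or> S s + Ubw (t - s) \<le> Q t"
          using QP[OF t] by blast
        from hs show ?thesis
        proof
          assume h: "ereal n + S s + Ufw (max (t - s - d) 0) \<le> Q t"
          define r where "r = min (s + d) t"
          have r: "0 \<le> r" "r \<le> t" "s \<le> r" "r - s \<le> d" "t - r = max (t - s - d) 0"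
            using s d0 by (auto simp: r_def)
          have "mmul 2 X U i 0 t \<le> X 0 0 r + U 0 0 (t - r)" using RX[of 0 r t i] r i0 by simp
          also have "\<dots> \<le> (- ereal n + (S s + ereal n)) + Ufw (max (t - s - d) 0)"
          proof (intro add_mono)
            have "X 0 0 r \<le> - ereal n + M 0 0 r" using XH[of 0 r 0] H00 r by simp
            also have "\<dots> \<le> - ereal n + (conv (C 0 0) S s + B 0 0 (r - s))"
              using MC[of 0 0 r] conv_le[OF s(1) r(3), of "conv (C 0 0) S" "B 0 0"]
              by (intro add_left_mono) simp
            also have "\<dots> \<le> - ereal n + (S s + ereal n)"
              using CS0[OF s(1)] B00[of "r - s"] r by (intro add_left_mono add_mono) auto
            finally show "X 0 0 r \<le> - ereal n + (S s + ereal n)" .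
          qed (simp add: U_def r)
          also have "\<dots> = S s + Ufw (max (t - s - d) 0)" by (simp add: em1 em1')
          also have "\<dots> \<le> Q t - ereal n" using h by (simp add: ereal_le_minus ac_simps)
          finally show ?thesis using ZQ by simp
        next
          assume h: "S s + Ubw (t - s) \<le> Q t"
          have "mmul 2 X U i 0 t \<le> X 0 1 s + U 1 0 (t - s)" using RX[of 1 s t i] s i0 by simp
          also have "\<dots> \<le> (- ereal n + (S s + 0)) + Ubw (t - s)"
          proof (intro add_mono)
            have "X 0 1 s \<le> - ereal n + M 0 1 s" using XH[of 0 s 1] H00 s by simp
            also have "\<dots> \<le> - ereal n + (conv (C 0 0) S s + B 0 1 (s - s))"
              using MC[of 0 1 s] conv_le[OF s(1) order_refl, of "conv (C 0 0) S" "B 0 1"]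
              by (intro add_left_mono) simp
            also have "\<dots> \<le> - ereal n + (S s + 0)"
              using CS0[OF s(1)] B01 by (intro add_left_mono add_mono) auto
            finally show "X 0 1 s \<le> - ereal n + (S s + 0)" .
          qed (simp add: U_def)
          also have "\<dots> = - ereal n + (S s + Ubw (t - s))" by (simp add: ac_simps)
          also have "\<dots> \<le> - ereal n + Q t" using h by (intro add_left_mono)
          also have "\<dots> = Q t - ereal n" by (simp add: minus_ereal_def ac_simps)
          finally show ?thesis using ZQ by simp
        qed
      qed
    next
      case False
      hence i1: "i = 1" using i by simp
      show ?thesis
      proof (cases "t = 0")
        case True
        have "mmul 2 X U i 0 t \<le> X 1 1 0 + U 1 0 (t - 0)" using RX[of 1 0 t i] t i1 by simp
        also have "\<dots> = X 1 1 0" using True assms(13) by (simp add: U_def)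
        also have "\<dots> \<le> - ereal nb + M 1 1 0" using XH[of 1 0 1] H11 by simp
        also have "\<dots> \<le> - ereal nb + mid 1 1 0" using Mmid by (intro add_left_mono)
        also have "\<dots> \<le> Z i 0 t" using Z0[of i t] nb0 by (simp add: mid_def ee_def) (rule order_trans[of _ 0], auto)
        finally show ?thesis .
      next
        case False
        define t' where "t' = t - min t w'"
        have t': "0 \<le> t'" "t' \<le> t" using t w0 by (auto simp: t'_def)
        have "Y 1 0 t = oplus (mmul 1 C Qm 1 0) ee t" using dynY t by simp
        hence "Ybw t = min (conv (C 1 0) Q t) (ee t)" unfolding mmul1
          by (simp add: Y_def oplus_def Qm_def)
        also have "\<dots> = conv (C 1 0) Q t" using False by (simp add: ee_def)
        finally have "ereal nb + Q t' \<le> Ybw t"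
          using conv_gd_ge[OF monoQ _ t, of w' nb] w0 by (simp add: C_def t'_def nb_def w'_def)
        hence "Q t' \<le> Ybw t - ereal nb" by (simp add: ereal_le_minus ac_simps)
        also have "\<dots> \<le> Z i 0 t" using i1 by (simp add: Z_def nb_def)
        finally have ZQ: "Q t' \<le> Z i 0 t" .
        obtain s where s: "0 \<le> s" "s \<le> t'" and
          hs: "ereal n + S s + Ufw (max (t' - s - d) 0) \<le> Q t' \<or> S s + Ubw (t' - s) \<le> Q t'"
          using QP[OF t'(1)] by blast
        define m where "m = min t w'"
        define a where "a = m + s"
        have m: "0 \<le> m" "m \<le> w'" "a \<le> t" "0 \<le> a" "a - m = s" "t - a = t' - s"
          using t w0 s by (auto simp: m_def a_def t'_def)
        have CSa: "conv (C 1 0) S a \<le> ereal nb + S s"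
        proof -
          have "conv (C 1 0) S a \<le> C 1 0 m + S (a - m)" using conv_le[of m a "C 1 0" S] m by (simp add: a_def s)
          also have "\<dots> = C 1 0 m + S s" using m by simp
          also have "\<dots> \<le> ereal nb + S s" using C10[of m] m by (intro add_right_mono) auto
          finally show ?thesis .
        qed
        from hs show ?thesis
        proof
          assume h: "ereal n + S s + Ufw (max (t' - s - d) 0) \<le> Q t'"
          define r where "r = min t (a + d)"
          have r: "0 \<le> r" "r \<le> t" "a \<le> r" "r - a \<le> d" "t - r = max (t' - s - d) 0"
            using m d0 by (auto simp: r_def t'_def a_def m_def)
          have "mmul 2 X U i 0 t \<le> X 1 0 r + U 0 0 (t - r)" using RX[of 0 r t i] r i1 by simp
          also have "\<dots> \<le> (- ereal nb + (ereal nb + S s + ereal n)) + Ufw (max (t' - s - d) 0)"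
          proof (intro add_mono)
            have "X 1 0 r \<le> - ereal nb + M 1 0 r" using XH[of 1 r 0] H11 r by simp
            also have "\<dots> \<le> - ereal nb + (conv (C 1 0) S a + B 0 0 (r - a))"
              using MC[of 1 0 r] conv_le[OF m(4) r(3), of "conv (C 1 0) S" "B 0 0"]
              by (intro add_left_mono) simp
            also have "\<dots> \<le> - ereal nb + (ereal nb + S s + ereal n)"
              using CSa B00[of "r - a"] r by (intro add_left_mono add_mono) auto
            finally show "X 1 0 r \<le> - ereal nb + (ereal nb + S s + ereal n)" .
          qed (simp add: U_def r)
          also have "\<dots> = ereal n + S s + Ufw (max (t' - s - d) 0)"
            by (simp add: add.assoc em2 em2') (simp add: ac_simps)
          also have "\<dots> \<le> Q t'" by (rule h)
          finally show ?thesis using ZQ by simp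
        next
          assume h: "S s + Ubw (t' - s) \<le> Q t'"
          have "mmul 2 X U i 0 t \<le> X 1 1 a + U 1 0 (t - a)" using RX[of 1 a t i] m i1 by simp
          also have "\<dots> \<le> (- ereal nb + (ereal nb + S s + 0)) + Ubw (t' - s)"
          proof (intro add_mono)
            have "X 1 1 a \<le> - ereal nb + M 1 1 a" using XH[of 1 a 1] H11 m by simp
            also have "\<dots> \<le> - ereal nb + (conv (C 1 0) S a + B 0 1 (a - a))"
              using MC[of 1 1 a] conv_le[OF m(4) order_refl, of "conv (C 1 0) S" "B 0 1"]
              by (intro add_left_mono) simp
            also have "\<dots> \<le> - ereal nb + (ereal nb + S s + 0)"
              using CSa B01 by (intro add_left_mono add_mono) auto
            finally show "X 1 1 a \<le> - ereal nb + (ereal nb + S s + 0)" .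
          qed (simp add: U_def m)
          also have "\<dots> = S s + Ubw (t' - s)" by (simp add: add.assoc em2 em2')
          also have "\<dots> \<le> Q t'" by (rule h)
          finally show ?thesis using ZQ by simp
        qed
      qed
    qed
  qed
  thus ?thesis unfolding X_def M_def .
qed

end
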